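(* Let $A\in H_n$ and $B\in H_k$ be matrices that are neither positive semidefinite nor negative semidefinite. Then there exists a positive unital linear map $\Phi:H_n\to H_k$ with $\Phi(A)=B$ if and only if $\|A_+\|_\infty\geq\|B_+\|_\infty$ and $\|A_-\|_\infty\geq\|B_-\|_\infty$.
   Context: $H_n$ denotes the real vector space of $n\times n$ complex Hermitian matrices; $X\geq0$ means $X$ is positive semidefinite. A linear map $\Phi:H_n\to H_k$ is positive if $\Phi(X)\geq0$ for all $X\geq0$, and unital if $\Phi(\mathbb{1}_n)=\mathbb{1}_k$. Every $A\in H_n$ decomposes uniquely as $A=A_+-A_-$ with $A_+,A_-$ positive semidefinite and $A_+A_-=0$ (positive and negative parts). $\|\cdot\|_\infty$ is the operator norm (largest singular value). *)

theory Defs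
  imports "HOL-Analysis.Analysis"
begin

definition hermitian :: "complex^'n^'n \<Rightarrow> bool" where
  "hermitian X \<longleftrightarrow> (\<forall>i j. X $ i $ j = cnj (X $ j $ i))"

definition psd :: "complex^'n^'n \<Rightarrow> bool" where
  "psd X \<longleftrightarrow> hermitian X \<and>
     (\<forall>v :: complex^'n. 0 \<le> Re (\<Sum>i\<in>UNIV. cnj (v $ i) * (X *v v) $ i))"

text \<open>Positive and negative parts: the unique decomposition A = A+ - A-,
  A+, A- psd, A+ A- = 0.\<close>
definition pos_part :: "complex^'n^'n \<Rightarrow> complex^'n^'n" where
  "pos_part A = (THE P. \<exists>N. psd P \<and> psd N \<and> P ** N = 0 \<and> A = P - N)"

definition neg_part :: "complex^'n^'n \<Rightarrow> complex^'n^'n" where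
  "neg_part A = (THE N. \<exists>P. psd P \<and> psd N \<and> P ** N = 0 \<and> A = P - N)"

text \<open>Operator norm (largest singular value) w.r.t. the Euclidean norm on complex^'n.\<close>
definition opnorm :: "complex^'n^'m \<Rightarrow> real" where
  "opnorm A = onorm (\<lambda>x :: complex^'n. A *v x)"

text \<open>Positive unital real-linear map H_n \<rightarrow> H_k (only its values on H_n matter).\<close>
definition pos_unital_map :: "(complex^'n^'n \<Rightarrow> complex^'k^'k) \<Rightarrow> bool" where
  "pos_unital_map \<Phi> \<longleftrightarrow>
     (\<forall>X. hermitian X \<longrightarrow> hermitian (\<Phi> X)) \<and>
     (\<forall>X Y. hermitian X \<longrightarrow> hermitian Y \<longrightarrow> \<Phi> (X + Y) = \<Phi> X + \<Phi> Y) \<and>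
     (\<forall>X (c::real). hermitian X \<longrightarrow> \<Phi> (c *\<^sub>R X) = c *\<^sub>R \<Phi> X) \<and>
     (\<forall>X. psd X \<longrightarrow> psd (\<Phi> X)) \<and>
     \<Phi> (mat 1) = mat 1"

end

theory Submission
  imports Defs
begin


definition cinner :: "complex^'n \<Rightarrow> complex^'n \<Rightarrow> complex" where
  "cinner x y = (\<Sum>i\<in>UNIV. cnj (x$i) * y$i)"

lemma cinner_add_right: "cinner x (y + z) = cinner x y + cinner x z"
  by (simp add: cinner_def distrib_left sum.distrib)
lemma cinner_add_left: "cinner (x + y) z = cinner x z + cinner y z"
  by (simp add: cinner_def distrib_right sum.distrib)
lemma cinner_diff_right: "cinner x (y - z) = cinner x y - cinner x z"
  by (simp add: cinner_def right_diff_distrib sum_subtractf)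
lemma cinner_diff_left: "cinner (x - y) z = cinner x z - cinner y z"
  by (simp add: cinner_def left_diff_distrib sum_subtractf)
lemma cinner_scale_right: "cinner x (c *s y) = c * cinner x y"
  by (simp add: cinner_def sum_distrib_left mult_ac)
lemma cinner_scale_left: "cinner (c *s x) y = cnj c * cinner x y"
  by (simp add: cinner_def sum_distrib_left mult_ac)
lemma cinner_zero_right[simp]: "cinner x 0 = 0" by (simp add: cinner_def)
lemma cinner_zero_left[simp]: "cinner 0 x = 0" by (simp add: cinner_def)
lemma cinner_sum_right: "cinner x (sum f S) = (\<Sum>j\<in>S. cinner x (f j))"
  by (simp add: cinner_def sum_distrib_left) (rule sum.swap)
lemma cinner_sum_left: "cinner (sum f S) y = (\<Sum>j\<in>S. cinner (f j) y)"
  by (simp add: cinner_def sum_distrib_right cnj_sum) (rule sum.swap)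
lemma cinner_commute: "cinner y x = cnj (cinner x y)"
  by (simp add: cinner_def cnj_sum mult.commute)
lemma Re_cinner: "Re (cinner x y) = inner x y"
  by (simp add: cinner_def inner_vec_def inner_complex_def Re_sum)
lemma cinner_self: "cinner x x = complex_of_real ((norm x)^2)"
proof -
  have "Im (cinner x x) = 0" by (simp add: cinner_def Im_sum)
  moreover have "Re (cinner x x) = (norm x)^2" by (simp add: Re_cinner power2_norm_eq_inner)
  ultimately show ?thesis by (simp add: complex_eq_iff)
qed

lemma mv_scale: "(A::complex^'n^'m) *v (c *s x) = c *s (A *v x)"
  by (simp add: vec_eq_iff matrix_vector_mult_def sum_distrib_left mult_ac)
lemma mv_sum: "(A::complex^'n^'m) *v (sum f S) = (\<Sum>j\<in>S. A *v f j)"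
proof -
  have "(\<Sum>j\<in>UNIV. A$i$j * (\<Sum>k\<in>S. f k $ j)) = (\<Sum>k\<in>S. \<Sum>j\<in>UNIV. A$i$j * f k $ j)" for i
    by (simp add: sum_distrib_left) (rule sum.swap)
  then show ?thesis by (simp add: vec_eq_iff matrix_vector_mult_def)
qed

lemma hermI: "(\<And>i j. X$i$j = cnj (X$j$i)) \<Longrightarrow> hermitian X"
  unfolding hermitian_def by blast
lemma hermD: "hermitian X \<Longrightarrow> X$i$j = cnj (X$j$i)"
  unfolding hermitian_def by blast

lemma herm_adj: assumes "hermitian A" shows "cinner x (A *v y) = cinner (A *v x) y"
proof -
  have h: "\<And>i j. cnj (A$j$i) = A$i$j" using assms unfolding hermitian_def by metis
  have "cinner x (A *v y) = (\<Sum>i\<in>UNIV. \<Sum>j\<in>UNIV. cnj (x$i) * A$i$j * y$j)"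
    by (simp add: cinner_def matrix_vector_mult_def sum_distrib_left mult.assoc)
  also have "\<dots> = (\<Sum>j\<in>UNIV. \<Sum>i\<in>UNIV. cnj (x$i) * A$i$j * y$j)" by (rule sum.swap)
  also have "\<dots> = (\<Sum>j\<in>UNIV. \<Sum>i\<in>UNIV. cnj (A$j$i) * cnj (x$i) * y$j)"
    by (simp add: h mult.commute)
  also have "\<dots> = cinner (A *v x) y"
    by (simp add: cinner_def matrix_vector_mult_def sum_distrib_right)
  finally show ?thesis .
qed


definition onf :: "nat \<Rightarrow> (nat \<Rightarrow> complex^'n) \<Rightarrow> bool" where
  "onf m u \<longleftrightarrow> (\<forall>i<m. \<forall>j<m. cinner (u i) (u j) = (if i = j then 1 else 0))"

lemma real_ortho_card:
  fixes g :: "nat \<Rightarrow> 'a::euclidean_space"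
  assumes g: "\<And>a b. a < M \<Longrightarrow> b < M \<Longrightarrow> inner (g a) (g b) = (if a = b then 1 else 0)"
  shows "M \<le> DIM('a)"
proof -
  let ?S = "g ` {..<M}"
  have inj: "inj_on g {..<M}"
  proof (rule inj_onI)
    fix a b assume "a \<in> {..<M}" "b \<in> {..<M}" "g a = g b"
    then have "inner (g a) (g b) = 1" using g[of a a] by simp
    then show "a = b" using g[of a b] \<open>a \<in> {..<M}\<close> \<open>b \<in> {..<M}\<close> by (auto split: if_splits)
  qed
  have "pairwise orthogonal ?S"
    unfolding pairwise_def orthogonal_def using g by auto
  moreover have "0 \<notin> ?S" using g by force
  ultimately have "independent ?S" by (rule pairwise_orthogonal_independent)
  then have "card ?S \<le> dim (UNIV::'a set)" by (intro independent_card_le_dim) auto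
  then show ?thesis using card_image[OF inj] by simp
qed

definition realfam :: "nat \<Rightarrow> (nat \<Rightarrow> complex^'n) \<Rightarrow> nat \<Rightarrow> complex^'n" where
  "realfam m u k = (if k < m then u k else \<i> *s u (k - m))"

lemma realfam_inner:
  assumes "onf m u" "a < 2*m" "b < 2*m"
  shows "inner (realfam m u a) (realfam m u b) = (if a = b then 1 else 0)"
proof -
  have o: "\<And>i j. i<m \<Longrightarrow> j<m \<Longrightarrow> cinner (u i) (u j) = (if i = j then 1 else 0)"
    using assms(1) unfolding onf_def by blast
  show ?thesis
    using assms(2,3)
    by (auto simp: realfam_def Re_cinner[symmetric] cinner_scale_left cinner_scale_right o)
qed

lemma onf_card: assumes "onf m (u :: nat \<Rightarrow> complex^'n)" shows "m \<le> CARD('n)"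
proof -
  have "2*m \<le> DIM(complex^'n)"
    by (rule real_ortho_card[of "2*m" "realfam m u"]) (use realfam_inner[OF assms] in auto)
  then show ?thesis by simp
qed

lemma exists_orth:
  assumes "onf m (u :: nat \<Rightarrow> complex^'n)" "m < CARD('n)"
  shows "\<exists>y. y \<noteq> 0 \<and> (\<forall>j<m. cinner (u j) y = 0)"
proof -
  let ?S = "realfam m u ` {..<2*m}"
  have "dim ?S \<le> card ?S" by (rule dim_le_card) (auto intro: span_base)
  also have "\<dots> \<le> 2*m" using card_image_le[of "{..<2*m}" "realfam m u"] by simp
  also have "\<dots> < DIM(complex^'n)" using assms(2) by simp
  finally obtain x :: "complex^'n" where x: "x \<noteq> 0" "\<And>y. y \<in> span ?S \<Longrightarrow> orthogonal x y"
    using orthogonal_to_subspace_exists by blast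
  have "cinner (u j) x = 0" if j: "j < m" for j
  proof -
    have "orthogonal x (realfam m u j)" using j by (intro x(2) span_base) auto
    then have r: "Re (cinner (u j) x) = 0" using j
      by (simp add: realfam_def orthogonal_def Re_cinner inner_commute)
    have "orthogonal x (realfam m u (m + j))" using j by (intro x(2) span_base) auto
    then have "Re (cinner (\<i> *s u j) x) = 0" using j
      by (simp add: realfam_def orthogonal_def Re_cinner inner_commute)
    then have i: "Im (cinner (u j) x) = 0" by (simp add: cinner_scale_left)
    from r i show ?thesis by (simp add: complex_eq_iff)
  qed
  then show ?thesis using x(1) by blast
qed

lemma sum_delta_nat:
  fixes c :: "nat \<Rightarrow> complex"
  assumes "j < n"
  shows "(\<Sum>i<n. c i * (if j = i then 1 else 0)) = c j"
  using assms by (simp add: if_distrib sum.delta cong: if_cong)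

lemma expansion:
  assumes "onf CARD('n) (u :: nat \<Rightarrow> complex^'n)"
  shows "x = (\<Sum>i<CARD('n). cinner (u i) x *s u i)"
proof (rule ccontr)
  let ?n = "CARD('n)"
  let ?y = "x - (\<Sum>i<?n. cinner (u i) x *s u i)"
  assume ne: "x \<noteq> (\<Sum>i<?n. cinner (u i) x *s u i)"
  have o: "\<And>i j. i<?n \<Longrightarrow> j<?n \<Longrightarrow> cinner (u j) (u i) = (if j = i then 1 else 0)"
    using assms unfolding onf_def by blast
  have orth: "cinner (u j) ?y = 0" if "j < ?n" for j
  proof -
    have "cinner (u j) (\<Sum>i<?n. cinner (u i) x *s u i) = (\<Sum>i<?n. cinner (u i) x * (if j = i then 1 else 0))"
      by (simp add: cinner_sum_right cinner_scale_right o that)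
    also have "\<dots> = cinner (u j) x" by (rule sum_delta_nat[OF that])
    finally show ?thesis by (simp add: cinner_diff_right)
  qed
  have yne: "?y \<noteq> 0" using ne by simp
  define y where "y = ?y"
  have ynz: "norm y \<noteq> 0" using yne y_def by simp
  define v where "v = complex_of_real (1 / norm y) *s y"
  have "cinner v v = complex_of_real (1 / norm y) * complex_of_real (1 / norm y) * cinner y y"
    unfolding v_def by (simp add: cinner_scale_left cinner_scale_right)
  also have "\<dots> = complex_of_real ((1 / norm y) * (1 / norm y) * (norm y)^2)"
    by (simp add: cinner_self)
  also have "(1 / norm y) * (1 / norm y) * (norm y)^2 = 1" using ynz by (simp add: power2_eq_square)
  finally have vv: "cinner v v = 1" by simp
  have vu: "cinner (u j) v = 0" if "j < ?n" for j
  proof -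
    have "cinner (u j) y = 0" using orth[OF that] y_def by simp
    then show ?thesis unfolding v_def cinner_scale_right by simp
  qed
  have "onf (Suc ?n) (u(?n := v))"
    unfolding onf_def
  proof (intro allI impI)
    fix i j assume "i < Suc ?n" "j < Suc ?n"
    then show "cinner ((u(?n := v)) i) ((u(?n := v)) j) = (if i = j then 1 else 0)"
      using o[of j i] vv vu[of i] vu[of j] cinner_commute[of v "u i"] cinner_commute[of v "u j"]
      by (auto simp: less_Suc_eq)
  qed
  from onf_card[OF this] show False by simp
qed



definition qf :: "complex^'n^'n \<Rightarrow> complex^'n \<Rightarrow> real" where
  "qf A v = Re (cinner v (A *v v))"

lemma psd_iff: "psd A \<longleftrightarrow> hermitian A \<and> (\<forall>v. 0 \<le> qf A v)"
  by (simp add: psd_def qf_def cinner_def)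

lemma mat_mv: "mat c *v x = c *s (x :: 'a::comm_ring_1^'n)"
proof -
  have "(\<Sum>j\<in>UNIV. (if i = j then c else 0) * x$j) = c * x$i" for i
  proof -
    have "(\<Sum>j\<in>UNIV. (if i = j then c else 0) * x$j) = (\<Sum>j\<in>UNIV. if i = j then c * x$j else 0)"
      by (rule sum.cong) auto
    then show ?thesis by simp
  qed
  then show ?thesis by (simp add: vec_eq_iff matrix_vector_mult_def mat_def)
qed

lemma cont_cinner: "continuous_on S (\<lambda>v. cinner a v)"
  unfolding cinner_def by (intro continuous_intros continuous_on_component continuous_on_id)

lemma cont_qf: "continuous_on S (\<lambda>v. qf A v)"
  unfolding qf_def cinner_def matrix_vector_mult_def
  by (simp add: vec_lambda_beta) (intro continuous_intros continuous_on_component continuous_on_id)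

lemma qexp: "cinner (a + c *s b) (M *v (a + c *s b)) = cinner a (M *v a) + c * cinner a (M *v b)
   + cnj c * cinner b (M *v a) + cnj c * c * cinner b (M *v b)"
  by (simp only: matrix_vector_right_distrib mv_scale cinner_add_left cinner_add_right
      cinner_scale_left cinner_scale_right) (simp add: algebra_simps)

lemma var_zero:
  fixes M :: "complex^'n^'n"
  assumes herm: "hermitian M"
    and W: "\<And>v. (\<forall>j<m. cinner (u j) v = 0) \<Longrightarrow> 0 \<le> qf M v"
    and u0: "\<forall>j<m. cinner (u j) u0 = 0" and q0: "qf M u0 = 0"
    and w0: "\<forall>j<m. cinner (u j) (M *v u0) = 0"
  shows "M *v u0 = 0"
proof (rule ccontr)
  define w where "w = M *v u0"
  assume "M *v u0 \<noteq> 0"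
  then have wpos: "(norm w)^2 > 0" by (simp add: w_def)
  define q where "q = qf M w"
  have key: "0 \<le> - 2 * s * (norm w)^2 + s^2 * q" for s :: real
  proof -
    let ?c = "complex_of_real (- s)"
    have inW: "\<forall>j<m. cinner (u j) (u0 + ?c *s w) = 0"
    proof (intro allI impI)
      fix j assume "j < m"
      then have "cinner (u j) u0 = 0" "cinner (u j) w = 0" using u0 w0 by (auto simp: w_def)
      then show "cinner (u j) (u0 + ?c *s w) = 0"
        by (simp only: cinner_add_right cinner_scale_right) simp
    qed
    have a1: "cinner u0 (M *v w) = cinner w w"
      using herm_adj[OF herm, of u0 w] by (simp add: w_def)
    have a2: "cinner w (M *v u0) = cinner w w" by (simp add: w_def)
    have "cinner (u0 + ?c *s w) (M *v (u0 + ?c *s w))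
        = cinner u0 (M *v u0) + ?c * cinner u0 (M *v w) + cnj ?c * cinner w (M *v u0)
          + cnj ?c * ?c * cinner w (M *v w)"
      by (rule qexp)
    also have "\<dots> = cinner u0 (M *v u0) + 2 * ?c * cinner w w + ?c * ?c * cinner w (M *v w)"
      by (simp add: a1 a2)
    finally have "qf M (u0 + ?c *s w) = qf M u0 + 2 * (- s) * (norm w)^2 + s^2 * qf M w"
      by (simp add: qf_def cinner_self power2_eq_square)
    with W[OF inW] q0 show ?thesis by (simp add: q_def)
  qed
  define s where "s = (norm w)^2 / (\<bar>q\<bar> + 1)"
  have s0: "s > 0" using wpos by (simp add: s_def)
  have "s * \<bar>q\<bar> < (norm w)^2"
  proof -
    have "s * \<bar>q\<bar> = (norm w)^2 * (\<bar>q\<bar> / (\<bar>q\<bar> + 1))" by (simp add: s_def)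
    also have "\<dots> < (norm w)^2 * 1"
      by (rule mult_strict_left_mono) (use wpos in auto)
    finally show ?thesis by simp
  qed
  moreover have "2 * (norm w)^2 \<le> s * q"
  proof -
    have "0 \<le> s * (- 2 * (norm w)^2 + s * q)" using key[of s] by (simp add: power2_eq_square algebra_simps)
    then have "0 \<le> - 2 * (norm w)^2 + s * q" using s0 by (simp add: zero_le_mult_iff)
    then show ?thesis by simp
  qed
  moreover have "s * q \<le> s * \<bar>q\<bar>" using s0 by (intro mult_left_mono) auto
  ultimately show False using wpos by linarith
qed



lemma herm_mat_minus: assumes "hermitian A" shows "hermitian (mat (complex_of_real r) - A)"
proof (rule hermI)
  fix i j
  have "A$i$j = cnj (A$j$i)" using hermD[OF assms] .
  then show "(mat (complex_of_real r) - A)$i$j = cnj ((mat (complex_of_real r) - A)$j$i)"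
    by (simp add: mat_def)
qed

lemma qf_scale: "qf A (complex_of_real r *s v) = r^2 * qf A v"
  by (simp add: qf_def mv_scale cinner_scale_left cinner_scale_right power2_eq_square mult.assoc)

lemma norm_smult_c: "norm (c *s (y::complex^'n)) = cmod c * norm y"
  unfolding norm_vec_def by (simp add: norm_mult L2_set_right_distrib)

lemma spectral_step:
  fixes A :: "complex^'n^'n"
  assumes herm: "hermitian A" and o: "onf m u"
    and ev: "\<forall>j<m. A *v u j = complex_of_real (l j) *s u j" and mn: "m < CARD('n)"
  shows "\<exists>v \<mu>. onf (Suc m) (u(m := v)) \<and> A *v v = complex_of_real \<mu> *s v"
proof -
  define K where "K = {v::complex^'n. norm v = 1 \<and> (\<forall>j<m. cinner (u j) v = 0)}"
  have "closed K"
  proof -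
    have "K = {v. norm v = 1} \<inter> (\<Inter>j\<in>{..<m}. {v. cinner (u j) v = 0})"
      by (auto simp: K_def)
    moreover have "closed {v::complex^'n. norm v = 1}"
      by (intro closed_Collect_eq continuous_intros)
    moreover have "closed {v::complex^'n. cinner (u j) v = 0}" for j
      by (intro closed_Collect_eq cont_cinner continuous_intros)
    ultimately show ?thesis by (auto intro!: closed_Int closed_INT)
  qed
  moreover have "bounded K" unfolding K_def bounded_iff by auto
  ultimately have cK: "compact K" by (simp add: compact_eq_bounded_closed)
  obtain y :: "complex^'n" where y: "y \<noteq> 0" "\<forall>j<m. cinner (u j) y = 0"
    using exists_orth[OF o mn] by blast
  have "complex_of_real (1 / norm y) *s y \<in> K"
    using y by (auto simp: K_def cinner_scale_right norm_smult_c norm_divide)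
  then have "K \<noteq> {}" by auto
  from continuous_attains_sup[OF cK this cont_qf]
  obtain v where vK: "v \<in> K" and vmax: "\<And>z. z \<in> K \<Longrightarrow> qf A z \<le> qf A v" by blast
  define \<mu> where "\<mu> = qf A v"
  define M where "M = mat (complex_of_real \<mu>) - A"
  have hM: "hermitian M" using herm_mat_minus[OF herm] by (simp add: M_def)
  have Mv: "M *v z = complex_of_real \<mu> *s z - A *v z" for z
    by (simp add: M_def matrix_vector_mult_diff_rdistrib mat_mv)
  have qM: "qf M z = \<mu> * (norm z)^2 - qf A z" for z
    by (simp add: qf_def Mv cinner_diff_right cinner_scale_right cinner_self)
  have W: "0 \<le> qf M z" if z: "\<forall>j<m. cinner (u j) z = 0" for z
  proof (cases "z = 0")
    case True then show ?thesis by (simp add: qf_def)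
  next
    case False
    define z' where "z' = complex_of_real (1 / norm z) *s z"
    have "z' \<in> K" using False z by (auto simp: K_def z'_def cinner_scale_right norm_smult_c norm_divide)
    then have "qf A z' \<le> \<mu>" using vmax by (simp add: \<mu>_def)
    then have "(1 / norm z)^2 * qf A z \<le> \<mu>" by (simp only: z'_def qf_scale)
    then have "qf A z \<le> \<mu> * (norm z)^2" using False
      by (simp add: field_simps)
    then show ?thesis by (simp add: qM)
  qed
  have v1: "norm v = 1" and vo: "\<forall>j<m. cinner (u j) v = 0" using vK by (auto simp: K_def)
  have q0: "qf M v = 0" using v1 by (simp add: qM \<mu>_def)
  have w0: "\<forall>j<m. cinner (u j) (M *v v) = 0"
  proof (intro allI impI)
    fix j assume j: "j < m"
    have "cinner (u j) (A *v v) = cinner (A *v u j) v" by (rule herm_adj[OF herm])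
    also have "\<dots> = 0" using ev j vo by (simp add: cinner_scale_left)
    finally show "cinner (u j) (M *v v) = 0"
      using vo j by (simp add: Mv cinner_diff_right cinner_scale_right)
  qed
  have "M *v v = 0" by (rule var_zero[OF hM W vo q0 w0])
  then have Av: "A *v v = complex_of_real \<mu> *s v" by (simp add: Mv)
  have vv: "cinner v v = 1" using v1 by (simp add: cinner_self)
  have ou: "\<And>i j. i<m \<Longrightarrow> j<m \<Longrightarrow> cinner (u i) (u j) = (if i = j then 1 else 0)"
    using o unfolding onf_def by blast
  have "onf (Suc m) (u(m := v))"
    unfolding onf_def
  proof (intro allI impI)
    fix i j assume "i < Suc m" "j < Suc m"
    then show "cinner ((u(m := v)) i) ((u(m := v)) j) = (if i = j then 1 else 0)"
      using ou[of i j] vv vo cinner_commute[of v "u i"] cinner_commute[of v "u j"]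
      by (auto simp: less_Suc_eq)
  qed
  with Av show ?thesis by blast
qed

lemma spectral_ind:
  fixes A :: "complex^'n^'n"
  assumes herm: "hermitian A"
  shows "m \<le> CARD('n) \<Longrightarrow> \<exists>u l. onf m u \<and> (\<forall>j<m. A *v u j = complex_of_real (l j) *s u j)"
proof (induction m)
  case 0 then show ?case by (auto simp: onf_def)
next
  case (Suc m)
  then obtain u l where o: "onf m u" and ev: "\<forall>j<m. A *v u j = complex_of_real (l j) *s u j" by auto
  from spectral_step[OF herm o ev] Suc.prems obtain v \<mu> where
    o': "onf (Suc m) (u(m := v))" and Av: "A *v v = complex_of_real \<mu> *s v" by auto
  have "\<forall>j<Suc m. A *v (u(m := v)) j = complex_of_real ((l(m := \<mu>)) j) *s (u(m := v)) j"
    using ev Av by (auto simp: less_Suc_eq)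
  with o' show ?case by blast
qed

lemma spectral:
  fixes A :: "complex^'n^'n"
  assumes "hermitian A"
  obtains u l where "onf CARD('n) u" "\<And>j. j < CARD('n) \<Longrightarrow> A *v u j = complex_of_real (l j) *s u j"
  using spectral_ind[OF assms, of "CARD('n)"] by auto



definition specm :: "(nat \<Rightarrow> complex^'n) \<Rightarrow> (nat \<Rightarrow> real) \<Rightarrow> complex^'n^'n" where
  "specm u f = (\<chi> a b. \<Sum>i<CARD('n). complex_of_real (f i) * (u i)$a * cnj ((u i)$b))"

lemma specm_mv: fixes u :: "nat \<Rightarrow> complex^'n" shows "specm u f *v x = (\<Sum>i<CARD('n). (complex_of_real (f i) * cinner (u i) x) *s u i)"
proof -
  have "(\<Sum>b\<in>UNIV. (\<Sum>i<CARD('n). complex_of_real (f i) * (u i)$a * cnj ((u i)$b)) * x$b)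
      = (\<Sum>i<CARD('n). complex_of_real (f i) * (\<Sum>b\<in>UNIV. cnj ((u i)$b) * x$b) * (u i)$a)" for a
    by (simp add: sum_distrib_left sum_distrib_right mult_ac) (rule sum.swap)
  then show ?thesis
    by (simp add: vec_eq_iff matrix_vector_mult_def specm_def cinner_def)
qed

lemma specm_herm: "hermitian (specm u f)"
  unfolding hermitian_def specm_def by (simp add: mult_ac)

lemma onf_coef:
  assumes "onf CARD('n) (u :: nat \<Rightarrow> complex^'n)" "j < CARD('n)"
  shows "cinner (u j) (\<Sum>i<CARD('n). d i *s u i) = d j"
proof -
  have o: "\<And>i. i<CARD('n) \<Longrightarrow> cinner (u j) (u i) = (if j = i then 1 else 0)"
    using assms unfolding onf_def by blast
  have "cinner (u j) (\<Sum>i<CARD('n). d i *s u i) = (\<Sum>i<CARD('n). d i * (if j = i then 1 else 0))"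
    by (simp add: cinner_sum_right cinner_scale_right o)
  also have "\<dots> = d j" by (rule sum_delta_nat[OF assms(2)])
  finally show ?thesis .
qed

lemma onf_norm2:
  assumes "onf CARD('n) (u :: nat \<Rightarrow> complex^'n)"
  shows "(norm (\<Sum>i<CARD('n). d i *s u i))^2 = (\<Sum>i<CARD('n). (cmod (d i))^2)"
proof -
  have "complex_of_real ((norm (\<Sum>i<CARD('n). d i *s u i))^2)
     = cinner (\<Sum>i<CARD('n). d i *s u i) (\<Sum>i<CARD('n). d i *s u i)" by (rule cinner_self[symmetric])
  also have "\<dots> = (\<Sum>j<CARD('n). cnj (d j) * cinner (u j) (\<Sum>i<CARD('n). d i *s u i))"
    by (simp only: cinner_sum_left cinner_scale_left)
  also have "\<dots> = (\<Sum>j<CARD('n). complex_of_real ((cmod (d j))^2))"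
    by (rule sum.cong) (simp_all add: onf_coef[OF assms] complex_norm_square[symmetric] mult.commute
       del: of_real_power)
  finally show ?thesis by (simp only: of_real_sum[symmetric] of_real_eq_iff)
qed

lemma onf_norm2_x:
  assumes "onf CARD('n) (u :: nat \<Rightarrow> complex^'n)"
  shows "(norm x)^2 = (\<Sum>i<CARD('n). (cmod (cinner (u i) x))^2)"
  using onf_norm2[OF assms, of "\<lambda>i. cinner (u i) x"] expansion[OF assms, of x] by simp

lemma specm_coef:
  assumes "onf CARD('n) (u :: nat \<Rightarrow> complex^'n)" "j < CARD('n)"
  shows "cinner (u j) (specm u f *v x) = complex_of_real (f j) * cinner (u j) x"
  unfolding specm_mv by (rule onf_coef[OF assms])

lemma qf_specm:
  assumes "onf CARD('n) (u :: nat \<Rightarrow> complex^'n)"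
  shows "qf (specm u f) x = (\<Sum>i<CARD('n). f i * (cmod (cinner (u i) x))^2)"
proof -
  have "cinner x (specm u f *v x) = (\<Sum>i<CARD('n). complex_of_real (f i) * cinner (u i) x * cinner x (u i))"
    by (simp add: specm_mv cinner_sum_right cinner_scale_right)
  also have "\<dots> = (\<Sum>i<CARD('n). complex_of_real (f i * (cmod (cinner (u i) x))^2))"
    by (rule sum.cong) (simp_all add: cinner_commute[of x] complex_norm_square[symmetric] mult_ac
       del: of_real_power)
  finally show ?thesis by (simp add: qf_def Re_sum)
qed

lemma specm_eq:
  fixes A :: "complex^'n^'n"
  assumes o: "onf CARD('n) u" and ev: "\<And>j. j < CARD('n) \<Longrightarrow> A *v u j = complex_of_real (l j) *s u j"
  shows "A = specm u l"
proof -
  have "A *v x = specm u l *v x" for x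
  proof -
    have "A *v x = A *v (\<Sum>i<CARD('n). cinner (u i) x *s u i)" using expansion[OF o, of x] by simp
    also have "\<dots> = (\<Sum>i<CARD('n). (complex_of_real (l i) * cinner (u i) x) *s u i)"
      by (simp add: mv_sum mv_scale ev vector_smult_assoc mult.commute)
    finally show ?thesis by (simp add: specm_mv)
  qed
  then show ?thesis by (simp add: matrix_eq)
qed

lemma specm_comp:
  assumes o: "onf CARD('n) (u :: nat \<Rightarrow> complex^'n)"
  shows "specm u f ** specm u g = specm u (\<lambda>i. f i * g i)"
proof -
  have "specm u f *v (specm u g *v x) = specm u (\<lambda>i. f i * g i) *v x" for x
    unfolding specm_mv[of u f] specm_mv[of u "\<lambda>i. f i * g i"]
    by (rule sum.cong) (simp_all add: specm_coef[OF o] mult.assoc)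
  then show ?thesis by (simp add: matrix_eq matrix_vector_mul_assoc)
qed

lemma specm_diff: fixes u :: "nat \<Rightarrow> complex^'n" shows "specm u f - specm u g = specm u (\<lambda>i. f i - g i)"
  by (simp add: specm_def vec_eq_iff sum_subtractf algebra_simps)



lemma qf_add: "qf (M + M') x = qf M x + qf M' x"
  by (simp add: qf_def matrix_vector_mult_add_rdistrib cinner_add_right)

lemma qf_diff: "qf (M - M') x = qf M x - qf M' x"
  by (simp add: qf_def matrix_vector_mult_diff_rdistrib cinner_diff_right)

lemma mv_scaleR: "((r::real) *\<^sub>R (M::complex^'n^'m)) *v x = complex_of_real r *s (M *v x)"
  by (simp add: vec_eq_iff matrix_vector_mult_def sum_distrib_left) (simp add: scaleR_conv_of_real mult.assoc)

lemma qf_scaleR: "qf (r *\<^sub>R M) x = r * qf M x"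
  by (simp add: qf_def mv_scaleR cinner_scale_right)

lemma mv_uminus: "(- (M::complex^'n^'m)) *v x = - (M *v x)"
  by (simp add: vec_eq_iff matrix_vector_mult_def sum_negf)

lemma qf_uminus: "qf (- M) x = - qf M x"
  by (simp add: qf_def mv_uminus cinner_def sum_negf)

lemma qf_mat1: "qf (mat 1) x = (norm x)^2"
  by (simp add: qf_def cinner_self)

lemma herm_add: assumes "hermitian X" "hermitian Y" shows "hermitian (X + Y)"
proof (rule hermI)
  fix i j
  have "X$i$j = cnj (X$j$i)" "Y$i$j = cnj (Y$j$i)" using hermD assms by blast+
  then show "(X + Y)$i$j = cnj ((X + Y)$j$i)" by simp
qed
lemma herm_scaleR: assumes "hermitian X" shows "hermitian ((r::real) *\<^sub>R X)"
proof (rule hermI)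
  fix i j
  have "X$i$j = cnj (X$j$i)" using hermD assms by blast
  then show "(r *\<^sub>R X)$i$j = cnj ((r *\<^sub>R X)$j$i)" by simp
qed
lemma herm_uminus: assumes "hermitian X" shows "hermitian (- X)"
proof (rule hermI)
  fix i j
  have "X$i$j = cnj (X$j$i)" using hermD assms by blast
  then show "(- X)$i$j = cnj ((- X)$j$i)" by simp
qed
lemma herm_mat1: "hermitian (mat 1)"
  unfolding hermitian_def mat_def by simp

lemma psd_add: "psd X \<Longrightarrow> psd Y \<Longrightarrow> psd (X + Y)"
  by (simp add: psd_iff herm_add qf_add)
lemma psd_scaleR: "psd X \<Longrightarrow> 0 \<le> r \<Longrightarrow> psd ((r::real) *\<^sub>R X)"
  by (simp add: psd_iff herm_scaleR qf_scaleR)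

lemma specm_zero: "specm u (\<lambda>i. 0) = 0"
  by (simp add: specm_def vec_eq_iff)

lemma qf_upper:
  fixes A :: "complex^'n^'n"
  assumes o: "onf CARD('n) u" and ev: "\<And>j. j < CARD('n) \<Longrightarrow> A *v u j = complex_of_real (l j) *s u j"
    and c: "\<And>i. i < CARD('n) \<Longrightarrow> l i \<le> c"
  shows "qf A x \<le> c * (norm x)^2"
proof -
  have "qf A x = (\<Sum>i<CARD('n). l i * (cmod (cinner (u i) x))^2)"
    using specm_eq[OF o ev] qf_specm[OF o] by simp
  also have "\<dots> \<le> (\<Sum>i<CARD('n). c * (cmod (cinner (u i) x))^2)"
    by (rule sum_mono) (simp add: c mult_right_mono)
  also have "\<dots> = c * (norm x)^2" by (simp add: onf_norm2_x[OF o] sum_distrib_left)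
  finally show ?thesis .
qed

lemma qf_lower:
  fixes A :: "complex^'n^'n"
  assumes o: "onf CARD('n) u" and ev: "\<And>j. j < CARD('n) \<Longrightarrow> A *v u j = complex_of_real (l j) *s u j"
    and c: "\<And>i. i < CARD('n) \<Longrightarrow> c \<le> l i"
  shows "c * (norm x)^2 \<le> qf A x"
proof -
  have "c * (norm x)^2 = (\<Sum>i<CARD('n). c * (cmod (cinner (u i) x))^2)"
    by (simp add: onf_norm2_x[OF o] sum_distrib_left)
  also have "\<dots> \<le> (\<Sum>i<CARD('n). l i * (cmod (cinner (u i) x))^2)"
    by (rule sum_mono) (simp add: c mult_right_mono)
  also have "\<dots> = qf A x"
    using specm_eq[OF o ev] qf_specm[OF o] by simp
  finally show ?thesis .
qed

lemma onf_norm1: assumes "onf CARD('n) (u :: nat \<Rightarrow> complex^'n)" "k < CARD('n)" shows "norm (u k) = 1"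
proof -
  have "cinner (u k) (u k) = 1" using assms by (simp add: onf_def)
  then have "complex_of_real ((norm (u k))^2) = 1" by (simp only: cinner_self)
  then have "(norm (u k))^2 = 1" by (simp only: of_real_eq_1_iff)
  then show ?thesis using norm_ge_zero[of "u k"] by (auto simp: power2_eq_1_iff)
qed

lemma qf_eig:
  assumes "onf CARD('n) (u :: nat \<Rightarrow> complex^'n)" "k < CARD('n)"
    "A *v u k = complex_of_real c *s u k"
  shows "qf A (u k) = c"
  using assms onf_norm1[OF assms(1,2)] by (simp add: qf_def cinner_scale_right cinner_self)

lemma decomp_exists:
  fixes A :: "complex^'n^'n"
  assumes o: "onf CARD('n) u" and ev: "\<And>j. j < CARD('n) \<Longrightarrow> A *v u j = complex_of_real (l j) *s u j"
  shows "psd (specm u (\<lambda>i. max (l i) 0)) \<and> psd (specm u (\<lambda>i. max (- l i) 0))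
    \<and> specm u (\<lambda>i. max (l i) 0) ** specm u (\<lambda>i. max (- l i) 0) = 0
    \<and> A = specm u (\<lambda>i. max (l i) 0) - specm u (\<lambda>i. max (- l i) 0)"
proof (intro conjI)
  show "psd (specm u (\<lambda>i. max (l i) 0))"
    by (simp add: psd_iff specm_herm qf_specm[OF o] sum_nonneg)
  show "psd (specm u (\<lambda>i. max (- l i) 0))"
    by (simp add: psd_iff specm_herm qf_specm[OF o] sum_nonneg)
  have "(\<lambda>i. max (l i) 0 * max (- l i) 0) = (\<lambda>i. 0)" by (auto simp: max_def)
  then show "specm u (\<lambda>i. max (l i) 0) ** specm u (\<lambda>i. max (- l i) 0) = 0"
    by (simp add: specm_comp[OF o] specm_zero)
  have "(\<lambda>i. max (l i) 0 - max (- l i) 0) = l" by (auto simp: max_def)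
  then show "A = specm u (\<lambda>i. max (l i) 0) - specm u (\<lambda>i. max (- l i) 0)"
    by (simp add: specm_diff specm_eq[OF o ev])
qed

lemma unique_vec:
  fixes A P N :: "complex^'n^'n"
  assumes P: "psd P" and N: "psd N" and PN: "P ** N = 0" and A: "A = P - N"
    and v: "A *v v = complex_of_real c *s v"
  shows "P *v v = complex_of_real (max c 0) *s v"
proof -
  have hP: "hermitian P" and hN: "hermitian N" using P N by (auto simp: psd_iff)
  have PN0: "P *v (N *v y) = 0" for y using PN by (simp add: matrix_vector_mul_assoc)
  have NP0: "N *v (P *v y) = 0" for y
  proof -
    define z where "z = N *v (P *v y)"
    have "cinner z z = cinner (P *v y) (N *v z)" unfolding z_def by (rule herm_adj[OF hN, symmetric])
    also have "\<dots> = cinner y (P *v (N *v z))" by (rule herm_adj[OF hP, symmetric])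
    also have "\<dots> = 0" by (simp add: PN0)
    finally show ?thesis by (simp add: cinner_self z_def)
  qed
  have Av: "P *v v - N *v v = complex_of_real c *s v" using v A by (simp add: matrix_vector_mult_diff_rdistrib)
  show ?thesis
  proof (cases "c > 0")
    case True
    have Nv: "N *v v = P *v v - complex_of_real c *s v" using Av by (simp add: algebra_simps)
    have NNv: "N *v (N *v v) = - (complex_of_real c *s (N *v v))"
      by (simp add: Nv matrix_vector_mult_diff_distrib mv_scale NP0)
    have "complex_of_real ((norm (N *v v))^2) = cinner (N *v v) (N *v v)" by (simp add: cinner_self)
    also have "\<dots> = cinner v (N *v (N *v v))" by (rule herm_adj[OF hN, symmetric])
    also have "\<dots> = - (complex_of_real c * cinner v (N *v v))"
      by (simp add: NNv cinner_def sum_negf sum_distrib_left mult_ac)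
    finally have "(norm (N *v v))^2 = - (c * qf N v)"
      by (simp add: qf_def complex_eq_iff)
    moreover have "0 \<le> qf N v" using N by (simp add: psd_iff)
    ultimately have "(norm (N *v v))^2 \<le> 0" using True by (simp add: mult_nonneg_nonneg)
    then have "N *v v = 0" by simp
    then show ?thesis using Av True by simp
  next
    case False
    have Pv: "P *v v = complex_of_real c *s v + N *v v" using Av by (simp add: algebra_simps)
    have PPv: "P *v (P *v v) = complex_of_real c *s (P *v v)"
      by (simp add: Pv matrix_vector_right_distrib mv_scale PN0)
    have "complex_of_real ((norm (P *v v))^2) = cinner (P *v v) (P *v v)" by (simp add: cinner_self)
    also have "\<dots> = cinner v (P *v (P *v v))" by (rule herm_adj[OF hP, symmetric])
    also have "\<dots> = complex_of_real c * cinner v (P *v v)"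
      by (simp add: PPv cinner_scale_right)
    finally have "(norm (P *v v))^2 = c * qf P v"
      by (simp add: qf_def complex_eq_iff)
    moreover have "0 \<le> qf P v" using P by (simp add: psd_iff)
    ultimately have "(norm (P *v v))^2 \<le> 0" using False by (simp add: mult_nonpos_nonneg)
    then have "P *v v = 0" by simp
    then show ?thesis using False by simp
  qed
qed

lemma unique_P:
  fixes A P N :: "complex^'n^'n"
  assumes o: "onf CARD('n) u" and ev: "\<And>j. j < CARD('n) \<Longrightarrow> A *v u j = complex_of_real (l j) *s u j"
    and P: "psd P" and N: "psd N" and PN: "P ** N = 0" and A: "A = P - N"
  shows "P = specm u (\<lambda>i. max (l i) 0)"
proof -
  have "P *v x = specm u (\<lambda>i. max (l i) 0) *v x" for x
  proof -
    have "P *v x = P *v (\<Sum>i<CARD('n). cinner (u i) x *s u i)" using expansion[OF o, of x] by simp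
    also have "\<dots> = (\<Sum>i<CARD('n). (complex_of_real (max (l i) 0) * cinner (u i) x) *s u i)"
      unfolding mv_sum mv_scale
      by (rule sum.cong) (simp_all add: unique_vec[OF P N PN A ev] vector_smult_assoc mult.commute)
    finally show ?thesis by (simp add: specm_mv)
  qed
  then show ?thesis by (simp add: matrix_eq)
qed

lemma parts:
  fixes A :: "complex^'n^'n"
  assumes o: "onf CARD('n) u" and ev: "\<And>j. j < CARD('n) \<Longrightarrow> A *v u j = complex_of_real (l j) *s u j"
  shows "pos_part A = specm u (\<lambda>i. max (l i) 0)" "neg_part A = specm u (\<lambda>i. max (- l i) 0)"
proof -
  note d = decomp_exists[OF o ev]
  show "pos_part A = specm u (\<lambda>i. max (l i) 0)"
    unfolding pos_part_def
  proof (rule the_equality)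
    show "\<exists>N. psd (specm u (\<lambda>i. max (l i) 0)) \<and> psd N \<and> specm u (\<lambda>i. max (l i) 0) ** N = 0
       \<and> A = specm u (\<lambda>i. max (l i) 0) - N" using d by blast
  next
    fix P assume "\<exists>N. psd P \<and> psd N \<and> P ** N = 0 \<and> A = P - N"
    then show "P = specm u (\<lambda>i. max (l i) 0)" using unique_P[OF o ev] by blast
  qed
  show "neg_part A = specm u (\<lambda>i. max (- l i) 0)"
    unfolding neg_part_def
  proof (rule the_equality)
    show "\<exists>P. psd P \<and> psd (specm u (\<lambda>i. max (- l i) 0)) \<and> P ** specm u (\<lambda>i. max (- l i) 0) = 0
       \<and> A = P - specm u (\<lambda>i. max (- l i) 0)" using d by blast
  next
    fix N assume "\<exists>P. psd P \<and> psd N \<and> P ** N = 0 \<and> A = P - N"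
    then obtain P where P: "psd P" "psd N" "P ** N = 0" "A = P - N" by blast
    then have "P = specm u (\<lambda>i. max (l i) 0)" using unique_P[OF o ev] by blast
    then show "N = specm u (\<lambda>i. max (- l i) 0)" using P(4) d by (simp add: algebra_simps)
  qed
qed

lemma specm_eig:
  assumes o: "onf CARD('n) (u :: nat \<Rightarrow> complex^'n)" and k: "k < CARD('n)"
  shows "specm u f *v u k = complex_of_real (f k) *s u k"
proof -
  have "specm u f *v u k = (\<Sum>i<CARD('n). (if i = k then complex_of_real (f k) *s u k else 0))"
    unfolding specm_mv
    by (rule sum.cong) (use o k in \<open>auto simp: onf_def\<close>)
  then show ?thesis using k by simp
qed

lemma opnorm_specm:
  assumes o: "onf CARD('n) (u :: nat \<Rightarrow> complex^'n)"
    and f0: "\<And>i. i < CARD('n) \<Longrightarrow> 0 \<le> f i" and fa: "\<And>i. i < CARD('n) \<Longrightarrow> f i \<le> a"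
    and k: "k < CARD('n)" and fk: "f k = a"
  shows "opnorm (specm u f) = a"
proof (rule antisym)
  have a0: "0 \<le> a" using f0[OF k] fk by simp
  show "opnorm (specm u f) \<le> a"
    unfolding opnorm_def
  proof (rule onorm_le)
    fix x :: "complex^'n"
    have "(norm (specm u f *v x))^2 = (\<Sum>i<CARD('n). (f i)^2 * (cmod (cinner (u i) x))^2)"
      unfolding specm_mv onf_norm2[OF o] by (simp add: norm_mult power_mult_distrib)
    also have "\<dots> \<le> (\<Sum>i<CARD('n). a^2 * (cmod (cinner (u i) x))^2)"
      by (rule sum_mono) (intro mult_right_mono power_mono, auto simp: f0 fa)
    also have "\<dots> = (a * norm x)^2" by (simp add: onf_norm2_x[OF o] sum_distrib_left power_mult_distrib)
    finally show "norm (specm u f *v x) \<le> a * norm x"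
      by (rule power2_le_imp_le) (simp add: a0)
  qed
  have bl: "bounded_linear (\<lambda>x. specm u f *v x)"
    using linear_conv_bounded_linear matrix_vector_mul_linear by blast
  have "norm (specm u f *v u k) / norm (u k) \<le> opnorm (specm u f)"
    unfolding opnorm_def by (rule le_onorm[OF bl])
  then show "a \<le> opnorm (specm u f)"
    by (simp add: specm_eig[OF o k] norm_smult_c onf_norm1[OF o k] fk a0)
qed

lemma max_facts:
  fixes g :: "nat \<Rightarrow> real"
  assumes "0 < n"
  shows "\<forall>i<n. g i \<le> Max (g ` {..<n})" "\<exists>k<n. g k = Max (g ` {..<n})"
proof -
  show "\<forall>i<n. g i \<le> Max (g ` {..<n})" by auto
  have "Max (g ` {..<n}) \<in> g ` {..<n}" using assms by (intro Max_in) auto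
  then show "\<exists>k<n. g k = Max (g ` {..<n})" by auto
qed



theorem theorem2:
  fixes A :: "complex^'n^'n" and B :: "complex^'k^'k"
  assumes "hermitian A" and "hermitian B"
    and "\<not> psd A" and "\<not> psd (- A)"
    and "\<not> psd B" and "\<not> psd (- B)"
  shows "(\<exists>\<Phi> :: complex^'n^'n \<Rightarrow> complex^'k^'k. pos_unital_map \<Phi> \<and> \<Phi> A = B) \<longleftrightarrow>
         (opnorm (pos_part A) \<ge> opnorm (pos_part B) \<and> opnorm (neg_part A) \<ge> opnorm (neg_part B))"
proof -
  obtain uA lA where oA: "onf CARD('n) uA"
    and evA: "\<And>j. j < CARD('n) \<Longrightarrow> A *v uA j = complex_of_real (lA j) *s uA j"
    by (rule spectral[OF assms(1)], blast)
  obtain uB lB where oB: "onf CARD('k) uB"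
    and evB: "\<And>j. j < CARD('k) \<Longrightarrow> B *v uB j = complex_of_real (lB j) *s uB j"
    by (rule spectral[OF assms(2)], blast)
  define aA where "aA = Max ((\<lambda>i. max (lA i) 0) ` {..<CARD('n)})"
  define bA where "bA = Max ((\<lambda>i. max (- lA i) 0) ` {..<CARD('n)})"
  define aB where "aB = Max ((\<lambda>i. max (lB i) 0) ` {..<CARD('k)})"
  define bB where "bB = Max ((\<lambda>i. max (- lB i) 0) ` {..<CARD('k)})"
  have n0: "0 < CARD('n)" and k0: "0 < CARD('k)" by simp_all
  note mA = max_facts[OF n0, of "\<lambda>i. max (lA i) 0", folded aA_def]
  note mbA = max_facts[OF n0, of "\<lambda>i. max (- lA i) 0", folded bA_def]
  note mB = max_facts[OF k0, of "\<lambda>i. max (lB i) 0", folded aB_def]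
  note mbB = max_facts[OF k0, of "\<lambda>i. max (- lB i) 0", folded bB_def]
  obtain kA where kA: "kA < CARD('n)" "max (lA kA) 0 = aA" using mA(2) by blast
  obtain kA' where kA': "kA' < CARD('n)" "max (- lA kA') 0 = bA" using mbA(2) by blast
  obtain kB where kB: "kB < CARD('k)" "max (lB kB) 0 = aB" using mB(2) by blast
  obtain kB' where kB': "kB' < CARD('k)" "max (- lB kB') 0 = bB" using mbB(2) by blast
  have aA0: "0 \<le> aA" and bA0: "0 \<le> bA" using kA kA' by auto
  have lAa: "\<And>i. i < CARD('n) \<Longrightarrow> lA i \<le> aA" using mA(1) by (metis max.bounded_iff)
  have lAb: "\<And>i. i < CARD('n) \<Longrightarrow> - bA \<le> lA i" using mbA(1) by (metis max.bounded_iff neg_le_iff_le minus_minus)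
  have lBa: "\<And>i. i < CARD('k) \<Longrightarrow> lB i \<le> aB" using mB(1) by (metis max.bounded_iff)
  have lBb: "\<And>i. i < CARD('k) \<Longrightarrow> - bB \<le> lB i" using mbB(1) by (metis max.bounded_iff neg_le_iff_le minus_minus)
  have opA: "opnorm (pos_part A) = aA"
    proof -
    have "opnorm (specm uA (\<lambda>i. max (lA i) 0)) = aA"
      by (rule opnorm_specm[OF oA _ _ kA(1)]) (use mA(1) kA(2) in auto)
    then show ?thesis by (simp only: parts(1)[OF oA evA])
  qed
  have onA: "opnorm (neg_part A) = bA"
    proof -
    have "opnorm (specm uA (\<lambda>i. max (- lA i) 0)) = bA"
      by (rule opnorm_specm[OF oA _ _ kA'(1)]) (use mbA(1) kA'(2) in auto)
    then show ?thesis by (simp only: parts(2)[OF oA evA])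
  qed
  have opB: "opnorm (pos_part B) = aB"
    proof -
    have "opnorm (specm uB (\<lambda>i. max (lB i) 0)) = aB"
      by (rule opnorm_specm[OF oB _ _ kB(1)]) (use mB(1) kB(2) in auto)
    then show ?thesis by (simp only: parts(1)[OF oB evB])
  qed
  have onB: "opnorm (neg_part B) = bB"
    proof -
    have "opnorm (specm uB (\<lambda>i. max (- lB i) 0)) = bB"
      by (rule opnorm_specm[OF oB _ _ kB'(1)]) (use mbB(1) kB'(2) in auto)
    then show ?thesis by (simp only: parts(2)[OF oB evB])
  qed
  have "(\<exists>\<Phi> :: complex^'n^'n \<Rightarrow> complex^'k^'k. pos_unital_map \<Phi> \<and> \<Phi> A = B) \<longleftrightarrow> (aB \<le> aA \<and> bB \<le> bA)"
  proof
    assume "\<exists>\<Phi> :: complex^'n^'n \<Rightarrow> complex^'k^'k. pos_unital_map \<Phi> \<and> \<Phi> A = B"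
    then obtain \<Phi> :: "complex^'n^'n \<Rightarrow> complex^'k^'k" where pu: "pos_unital_map \<Phi>" and PA: "\<Phi> A = B"
      by blast
    have add: "\<And>X Y. hermitian X \<Longrightarrow> hermitian Y \<Longrightarrow> \<Phi> (X + Y) = \<Phi> X + \<Phi> Y"
      and scal: "\<And>X c. hermitian X \<Longrightarrow> \<Phi> (c *\<^sub>R X) = c *\<^sub>R \<Phi> X"
      and pos: "\<And>X. psd X \<Longrightarrow> psd (\<Phi> X)" and unit: "\<Phi> (mat 1) = mat 1"
      using pu unfolding pos_unital_map_def by blast+
    have lin: "\<Phi> (r *\<^sub>R mat 1 + s *\<^sub>R A) = r *\<^sub>R mat 1 + s *\<^sub>R B" for r s
      using add[OF herm_scaleR[OF herm_mat1] herm_scaleR[OF assms(1)]] scal[OF herm_mat1] scal[OF assms(1)]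
        unit PA by simp
    have qfl: "qf (r *\<^sub>R mat 1 + s *\<^sub>R M) x = r * (norm x)^2 + s * qf M x" for r s M x
      by (simp add: qf_add qf_scaleR qf_mat1)
    have hX: "hermitian (r *\<^sub>R mat 1 + s *\<^sub>R A)" for r s
      by (intro herm_add herm_scaleR herm_mat1 assms(1))
    have nB: "\<And>k. k < CARD('k) \<Longrightarrow> norm (uB k) = 1" using onf_norm1[OF oB] by blast
    have "psd (aA *\<^sub>R mat 1 + (-1) *\<^sub>R A)"
    proof -
      have "0 \<le> qf (aA *\<^sub>R mat 1 + (-1) *\<^sub>R A) x" for x
        using qf_upper[OF oA evA lAa, of x] by (simp add: qf_add qf_diff qf_uminus qf_scaleR qf_mat1)
      then show ?thesis using hX unfolding psd_iff by blast
    qed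
    then have "psd (aA *\<^sub>R mat 1 + (-1) *\<^sub>R B)" using pos lin by metis
    then have "0 \<le> qf (aA *\<^sub>R mat 1 + (-1) *\<^sub>R B) (uB kB)" by (simp add: psd_iff)
    then have "lB kB \<le> aA" using qf_eig[OF oB kB(1) evB[OF kB(1)]] nB[OF kB(1)] by (simp add: qf_add qf_diff qf_uminus qf_scaleR qf_mat1)
    then have c1: "aB \<le> aA" using kB(2) aA0 by (auto simp: max_def split: if_splits)
    have "psd (bA *\<^sub>R mat 1 + 1 *\<^sub>R A)"
    proof -
      have "0 \<le> qf (bA *\<^sub>R mat 1 + 1 *\<^sub>R A) x" for x
        using qf_lower[OF oA evA lAb, of x] by (simp add: qf_add qf_diff qf_uminus qf_scaleR qf_mat1)
      then show ?thesis using hX unfolding psd_iff by blast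
    qed
    then have "psd (bA *\<^sub>R mat 1 + 1 *\<^sub>R B)" using pos lin by metis
    then have "0 \<le> qf (bA *\<^sub>R mat 1 + 1 *\<^sub>R B) (uB kB')" by (simp add: psd_iff)
    then have "- lB kB' \<le> bA" using qf_eig[OF oB kB'(1) evB[OF kB'(1)]] nB[OF kB'(1)] by (simp add: qf_add qf_diff qf_uminus qf_scaleR qf_mat1)
    then have c2: "bB \<le> bA" using kB'(2) bA0 by (auto simp: max_def split: if_splits)
    from c1 c2 show "aB \<le> aA \<and> bB \<le> bA" by simp
  next
    assume "aB \<le> aA \<and> bB \<le> bA"
    then have ab: "aB \<le> aA" "bB \<le> bA" by auto
    have "\<exists>i<CARD('n). lA i > 0"
    proof (rule ccontr)
      assume "\<not> (\<exists>i<CARD('n). lA i > 0)"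
      then have "\<And>i. i < CARD('n) \<Longrightarrow> lA i \<le> 0" by force
      from qf_upper[OF oA evA this] have "\<And>x. 0 \<le> qf (- A) x" by (simp add: qf_uminus)
      then have "psd (- A)" using herm_uminus[OF assms(1)] by (simp add: psd_iff)
      with assms(4) show False by simp
    qed
    then obtain i where i: "i < CARD('n)" "lA i > 0" by blast
    have "\<exists>i<CARD('n). lA i < 0"
    proof (rule ccontr)
      assume "\<not> (\<exists>i<CARD('n). lA i < 0)"
      then have "\<And>i. i < CARD('n) \<Longrightarrow> 0 \<le> lA i" by force
      from qf_lower[OF oA evA this] have "\<And>x. 0 \<le> qf A x" by simp
      then have "psd A" using assms(1) by (simp add: psd_iff)
      with assms(3) show False by simp
    qed
    then obtain i' where i': "i' < CARD('n)" "lA i' < 0" by blast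
    have aApos: "aA > 0" using lAa[OF i(1)] i(2) by simp
    have bApos: "bA > 0" using lAb[OF i'(1)] i'(2) by simp
    have lkA: "lA kA = aA" using kA(2) aApos by (auto simp: max_def split: if_splits)
    have lkA': "lA kA' = - bA" using kA'(2) bApos by (auto simp: max_def split: if_splits)
    define u where "u = uA kA"
    define w where "w = uA kA'"
    have qu: "qf A u = aA" unfolding u_def using qf_eig[OF oA kA(1) evA[OF kA(1)]] lkA by simp
    have qw: "qf A w = - bA" unfolding w_def using qf_eig[OF oA kA'(1) evA[OF kA'(1)]] lkA' by simp
    have nu: "norm u = 1" "norm w = 1" unfolding u_def w_def using onf_norm1[OF oA] kA kA' by auto
    define C' where "C' = B + bA *\<^sub>R mat 1"
    define D' where "D' = aA *\<^sub>R mat 1 + (-1) *\<^sub>R B"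
    define C where "C = (1 / (aA + bA)) *\<^sub>R C'"
    define D where "D = (1 / (aA + bA)) *\<^sub>R D'"
    have hC: "hermitian C" and hD: "hermitian D"
      unfolding C_def D_def C'_def D'_def by (intro herm_add herm_scaleR herm_mat1 assms(2))+
    have pC': "psd C'"
    proof -
      have lb: "- bA \<le> lB j" if "j < CARD('k)" for j using lBb[OF that] ab by simp
      have "0 \<le> qf C' x" for x using qf_lower[OF oB evB lb, of x]
        by (simp add: C'_def qf_add qf_scaleR qf_mat1; linarith)
      moreover have "hermitian C'" unfolding C'_def by (intro herm_add herm_scaleR herm_mat1 assms(2))
      ultimately show ?thesis unfolding psd_iff by blast
    qed
    have pD': "psd D'"
    proof -
      have ub: "lB j \<le> aA" if "j < CARD('k)" for j using lBa[OF that] ab by simp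
      have "0 \<le> qf D' x" for x using qf_upper[OF oB evB ub, of x]
        by (simp add: D'_def qf_add qf_diff qf_uminus qf_scaleR qf_mat1; linarith)
      moreover have "hermitian D'" unfolding D'_def by (intro herm_add herm_scaleR herm_mat1 assms(2))
      ultimately show ?thesis unfolding psd_iff by blast
    qed
    have pC: "psd C" unfolding C_def using pC' aApos bApos by (intro psd_scaleR) auto
    have pD: "psd D" unfolding D_def using pD' aApos bApos by (intro psd_scaleR) auto
    define \<Phi> :: "complex^'n^'n \<Rightarrow> complex^'k^'k" where "\<Phi> X = qf X u *\<^sub>R C + qf X w *\<^sub>R D" for X
    have "pos_unital_map \<Phi>"
      unfolding pos_unital_map_def
    proof (intro conjI allI impI)
      fix X :: "complex^'n^'n"
      show "hermitian (\<Phi> X)" unfolding \<Phi>_def by (intro herm_add herm_scaleR hC hD)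
    next
      fix X Y :: "complex^'n^'n"
      show "\<Phi> (X + Y) = \<Phi> X + \<Phi> Y" unfolding \<Phi>_def by (simp add: qf_add scaleR_add_left)
    next
      fix X :: "complex^'n^'n" and c :: real
      show "\<Phi> (c *\<^sub>R X) = c *\<^sub>R \<Phi> X" unfolding \<Phi>_def by (simp add: qf_scaleR scaleR_add_right)
    next
      fix X :: "complex^'n^'n" assume "psd X"
      then have "0 \<le> qf X u" "0 \<le> qf X w" by (auto simp: psd_iff)
      then show "psd (\<Phi> X)" unfolding \<Phi>_def by (intro psd_add psd_scaleR pC pD)
    next
      have "C' + D' = (aA + bA) *\<^sub>R mat 1"
        by (simp add: C'_def D'_def algebra_simps)
      then have "C + D = mat 1"
        using aApos bApos by (simp add: C_def D_def scaleR_add_right[symmetric])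
      then show "\<Phi> (mat 1) = mat 1" unfolding \<Phi>_def by (simp add: qf_mat1 nu)
    qed
    moreover have "\<Phi> A = B"
    proof -
      have "aA *\<^sub>R C' - bA *\<^sub>R D' = (aA + bA) *\<^sub>R B"
        by (simp add: C'_def D'_def algebra_simps)
      then have "(1 / (aA + bA)) *\<^sub>R (aA *\<^sub>R C' - bA *\<^sub>R D') = B"
        using aApos bApos by simp
      moreover have "aA *\<^sub>R C - bA *\<^sub>R D = (1 / (aA + bA)) *\<^sub>R (aA *\<^sub>R C' - bA *\<^sub>R D')"
        unfolding C_def D_def by (simp add: scaleR_diff_right)
      ultimately have "aA *\<^sub>R C - bA *\<^sub>R D = B" by simp
      then show ?thesis unfolding \<Phi>_def by (simp add: qu qw)
    qed
    ultimately show "\<exists>\<Phi> :: complex^'n^'n \<Rightarrow> complex^'k^'k. pos_unital_map \<Phi> \<and> \<Phi> A = B" by blast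
  qed
  then show ?thesis using opA onA opB onB by simp
qed


end
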